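(* Consider the GSEM described in the context in the "CCD" case: conditional on $\mathbf W=\mathbf w$, $X\sim N(\mu_x,\sigma_x^2)$ with $\mu_x=\mathbf w_1^\top\boldsymbol\beta_x$ and $M\sim N(\mu_m,\sigma_m^2)$ with $\mu_m=\mathbf w^\top\boldsymbol\beta_m$ ($\sigma_x,\sigma_m>0$), and $Y$ is Bernoulli with $P(Y=1\mid\mathbf w)=\mathrm{expit}(\mathbf w^\top\boldsymbol\beta_y)$, $\mathrm{expit}(t)=e^t/(1+e^t)$. Define $l_y(\mathbf w)=\Phi^{-1}(F_y(0\mid\mathbf w))=-\Phi^{-1}(\mathrm{expit}(\mathbf w^\top\boldsymbol\beta_y))$, $z_x=(x-\mathbf w_1^\top\boldsymbol\beta_x)/\sigma_x$, and $\psi(z_a,z_m^* )=\Phi(\tau_y l_y(\mathbf w)-\gamma z_a-\tau_m\beta z_m^* )$. For real $z$ let $\pi(\cdot\mid Z_x=z)$ denote the $N\!\left(\alpha z/\tau_m,\,1/\tau_m^2\right)$ density (the conditional density of $Z_m^*$ given $Z_x=z$). Then for any $x_0,x_1$, $$\mathrm{NDE}(x_0,x_1;\mathbf w)=\int_{-\infty}^{\infty}\big(\psi(z_{x_0},z_m^* )-\psi(z_{x_1},z_m^* )\big)\,\pi(z_m^*\mid Z_x=z_{x_0})\,dz_m^*,$$ $$\mathrm{NIE}(x_0,x_1;\mathbf w)=\int_{-\infty}^{\infty}\psi(z_{x_1},z_m^* )\,\pi(z_m^*\mid Z_x=z_{x_0})\,dz_m^*-\int_{-\infty}^{\infty}\psi(z_{x_1},z_m^*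 )\,\pi(z_m^*\mid Z_x=z_{x_1})\,dz_m^*.$$ Consequently, for $x_0\neq x_1$: $\mathrm{NDE}(x_0,x_1;\mathbf w)=0$ if and only if $\gamma=0$, and $\mathrm{NIE}(x_0,x_1;\mathbf w)=0$ if $\alpha=0$ or $\beta=0$.
   Context: Generalized structural equation model (GSEM). Let $X$ (exposure), $M$ (mediator), $Y$ (outcome) be scalar random variables and $\mathbf W=(\mathbf W_1^\top,\mathbf W_2^\top)^\top$ a vector of confounders (first entry $1$), with $\mathbf w=(\mathbf w_1^\top,\mathbf w_2^\top)^\top$ a fixed value. Fix real parameters $\alpha,\beta,\gamma$ and let $(Z_x,Z_m,Z_y)$ be latent variables with $Z_x\sim N(0,1)$, $Z_m=\alpha Z_x+\epsilon_m$, $Z_y=\gamma Z_x+\beta Z_m+\epsilon_y$, where $Z_x,\epsilon_m,\epsilon_y$ are independent $N(0,1)$ (independent of $\mathbf W$). Put $\tau_m=\sqrt{\alpha^2+1}$, $\tau_y=\sqrt{(\gamma+\alpha\beta)^2+\beta^2+1}$, $Z_m^*=Z_m/\tau_m$, $Z_y^*=Z_y/\tau_y$ (each standard normal). Conditional on $\mathbf W=\mathbf w$, with marginal CDFs $F_x(\cdot\mid\mathbf w),F_m(\cdot\mid\mathbf w),F_y(\cdot\mid\mathbf w)$ given by generalized linear models, the observed variables are $X=F_x^{-1}(\Phi(Z_x))$, $M=F_m^{-1}(\Phi(Z_m^* ))$, $Y=F_y^{-1}(\Phi(Z_y^* ))$, where $\Phi,\phi$ denote the standard normal CDF and density and $F^{-1}$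 is the generalized inverse (quantile function). Counterfactual mean: $\mathrm E\{Y(x_a,M(x_b))\mid\mathbf W=\mathbf w\}:=\mathrm E_M\{\mathrm E(Y\mid M,X=x_a,\mathbf W=\mathbf w)\mid X=x_b,\mathbf W=\mathbf w\}$. Conditional natural direct and indirect effects for a change of $X$ from $x_0$ to $x_1$: $\mathrm{NDE}(x_0,x_1;\mathbf w)=\mathrm E\{Y(x_1,M(x_0))\mid\mathbf w\}-\mathrm E\{Y(x_0,M(x_0))\mid\mathbf w\}$ and $\mathrm{NIE}(x_0,x_1;\mathbf w)=\mathrm E\{Y(x_1,M(x_1))\mid\mathbf w\}-\mathrm E\{Y(x_1,M(x_0))\mid\mathbf w\}$. *)

theory Defs
  imports "HOL-Probability.Probability"
begin

definition std_normal :: "real measure" where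
  "std_normal = density lborel std_normal_density"

definition Phi :: "real \<Rightarrow> real" where
  "Phi x = measure std_normal {..x}"

definition normal_cdf :: "real \<Rightarrow> real \<Rightarrow> real \<Rightarrow> real" where
  "normal_cdf mu s x = measure (density lborel (normal_density mu s)) {..x}"

definition gen_inv :: "(real \<Rightarrow> real) \<Rightarrow> real \<Rightarrow> real" where
  "gen_inv F u = Inf {y. u \<le> F y}"

definition expit :: "real \<Rightarrow> real" where
  "expit t = exp t / (1 + exp t)"

definition bernoulli_cdf :: "real \<Rightarrow> real \<Rightarrow> real" where
  "bernoulli_cdf p y = (if y < 0 then 0 else if y < 1 then 1 - p else 1)"

definition tau_m :: "real \<Rightarrow> real" where
  "tau_m \<alpha> = sqrt (\<alpha>^2 + 1)"

definition tau_y :: "real \<Rightarrow> real \<Rightarrow> real \<Rightarrow> real" where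
  "tau_y \<alpha> \<beta> \<gamma> = sqrt ((\<gamma> + \<alpha> * \<beta>)^2 + \<beta>^2 + 1)"

(* GSEM, conditional on W = w, with marginal CDFs Fx Fm Fy (given w).
   Observed variables: X = Fx^-1(Phi Z_x), M = Fm^-1(Phi Zm_star), Y = Fy^-1(Phi Zy_star).
   Since X and M (continuous case) determine Z_x = Phi^-1(Fx X) and Zm_star = Phi^-1(Fm M),
   conditioning on (M = m, X = x) amounts to fixing the latent Z_x, Z_m; the remaining
   randomness eps_y ~ N(0,1) is independent of them.  Hence
     E(Y | M = m, X = x, w) = E_eps { Fy^-1(Phi((gamma z_x + beta tau_m zm_star + eps)/tau_y)) } *)
definition gsem_reg ::
  "real \<Rightarrow> real \<Rightarrow> real \<Rightarrow> (real \<Rightarrow> real) \<Rightarrow> (real \<Rightarrow> real) \<Rightarrow> (real \<Rightarrow> real)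
     \<Rightarrow> real \<Rightarrow> real \<Rightarrow> real" where
  "gsem_reg \<alpha> \<beta> \<gamma> Fx Fm Fy x m =
     (\<integral>e. gen_inv Fy (Phi ((\<gamma> * gen_inv Phi (Fx x)
                         + \<beta> * tau_m \<alpha> * gen_inv Phi (Fm m) + e) / tau_y \<alpha> \<beta> \<gamma>)) \<partial>std_normal)"

(* Counterfactual mean E{Y(xa, M(xb)) | w} = E_M{ E(Y | M, X = xa, w) | X = xb, w },
   where given X = xb (i.e. Z_x = z_xb) we have M = Fm^-1(Phi((alpha z_xb + eps_m)/tau_m)),
   eps_m ~ N(0,1). *)
definition gsem_cf ::
  "real \<Rightarrow> real \<Rightarrow> real \<Rightarrow> (real \<Rightarrow> real) \<Rightarrow> (real \<Rightarrow> real) \<Rightarrow> (real \<Rightarrow> real)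
     \<Rightarrow> real \<Rightarrow> real \<Rightarrow> real" where
  "gsem_cf \<alpha> \<beta> \<gamma> Fx Fm Fy xa xb =
     (\<integral>e. gsem_reg \<alpha> \<beta> \<gamma> Fx Fm Fy xa
            (gen_inv Fm (Phi ((\<alpha> * gen_inv Phi (Fx xb) + e) / tau_m \<alpha>))) \<partial>std_normal)"

definition NDE where
  "NDE \<alpha> \<beta> \<gamma> Fx Fm Fy x0 x1 =
     gsem_cf \<alpha> \<beta> \<gamma> Fx Fm Fy x1 x0 - gsem_cf \<alpha> \<beta> \<gamma> Fx Fm Fy x0 x0"

definition NIE where
  "NIE \<alpha> \<beta> \<gamma> Fx Fm Fy x0 x1 =
     gsem_cf \<alpha> \<beta> \<gamma> Fx Fm Fy x1 x1 - gsem_cf \<alpha> \<beta> \<gamma> Fx Fm Fy x1 x0"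

end

theory Submission
  imports Defs
begin


lemma std_normal_prob: "prob_space std_normal"
  unfolding std_normal_def by (rule prob_space_normal_density) simp

lemma std_normal_real_dist: "real_distribution std_normal"
proof -
  interpret prob_space std_normal by (rule std_normal_prob)
  show ?thesis by unfold_locales (simp add: std_normal_def)
qed

lemma sets_std_normal[simp, measurable_cong]: "sets std_normal = sets borel"
  by (simp add: std_normal_def)

lemma space_std_normal[simp]: "space std_normal = UNIV"
  by (simp add: std_normal_def)

lemma Phi_cdf: "Phi = cdf std_normal"
  by (simp add: Phi_def cdf_def fun_eq_iff)

lemma std_normal_fbm: "finite_borel_measure std_normal"
  by (rule real_distribution.finite_borel_measure_M[OF std_normal_real_dist])

lemma Phi_mono: "x \<le> y \<Longrightarrow> Phi x \<le> Phi y"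
  unfolding Phi_cdf by (rule finite_borel_measure.cdf_nondecreasing[OF std_normal_fbm])

lemma Phi_borel[measurable]: "Phi \<in> borel_measurable borel"
  by (rule borel_measurable_mono) (auto simp: mono_def Phi_mono)

lemma Phi_le1: "Phi x \<le> 1"
  unfolding Phi_cdf by (rule real_distribution.cdf_bounded_prob[OF std_normal_real_dist])

lemma Phi_top: "(Phi \<longlongrightarrow> 1) at_top"
  unfolding Phi_cdf by (rule real_distribution.cdf_lim_at_top_prob[OF std_normal_real_dist])

lemma Phi_bot: "(Phi \<longlongrightarrow> 0) at_bot"
  unfolding Phi_cdf by (rule finite_borel_measure.cdf_lim_at_bot) 
    (use real_distribution.finite_borel_measure_M[OF std_normal_real_dist] in auto)

lemma emeasure_std_normal: "A \<in> sets borel \<Longrightarrow>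
   emeasure std_normal A = (\<integral>\<^sup>+ x. ennreal (std_normal_density x) * indicator A x \<partial>lborel)"
  unfolding std_normal_def by (subst emeasure_density) auto

lemma Phi_cont: "isCont Phi x"
proof -
  have "emeasure std_normal {x} = 0"
    apply (subst emeasure_std_normal, simp)
    apply (subst nn_integral_0_iff_AE, simp)
    using AE_lborel_singleton[of x] by eventually_elim auto
  then have "measure std_normal {x} = 0" by (simp add: measure_def)
  then show ?thesis unfolding Phi_cdf
    using finite_borel_measure.isCont_cdf[OF std_normal_fbm] by simp
qed

lemma Phi_strict: assumes "x < y" shows "Phi x < Phi y"
proof -
  interpret prob_space std_normal by (rule std_normal_prob)
  have d: "Phi y - Phi x = measure std_normal {x<..y}"
    unfolding Phi_cdf using finite_borel_measure.cdf_diff_eq[OF std_normal_fbm assms] .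
  have "emeasure std_normal {x<..y} \<noteq> 0"
  proof
    assume "emeasure std_normal {x<..y} = 0"
    then have "AE t in lborel. ennreal (std_normal_density t) * indicator {x<..y} t = 0"
      by (subst (asm) emeasure_std_normal, simp) (subst (asm) nn_integral_0_iff_AE, auto)
    then have "AE t in lborel. t \<notin> {x<..y}"
      by eventually_elim (auto simp: std_normal_density_def indicator_def split: if_splits)
    then have "{x<..y} \<in> null_sets lborel"
      by (subst AE_iff_null_sets) auto
    with assms show False by auto
  qed
  then have "measure std_normal {x<..y} > 0"
    by (simp add: emeasure_eq_measure zero_less_measure_iff)
  with d show ?thesis by simp
qed

lemma Phi_pos: "Phi x > 0"
proof -
  have "Phi (x - 1) \<ge> 0" unfolding Phi_def by simp
  with Phi_strict[of "x - 1" x] show ?thesis by simp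
qed

lemma Phi_lt1: "Phi x < 1"
  using Phi_strict[of x "x+1"] Phi_le1[of "x+1"] by simp

lemma Phi_inj_le: "Phi x \<le> Phi y \<longleftrightarrow> x \<le> y"
  using Phi_strict Phi_mono by (meson not_le)

lemma gen_inv_Phi: "gen_inv Phi (Phi s) = s"
proof -
  have "{y. Phi s \<le> Phi y} = {s..}" by (auto simp: Phi_inj_le)
  then show ?thesis unfolding gen_inv_def by simp
qed

lemma Phi_surj: assumes "0 < u" "u < 1" shows "\<exists>l. Phi l = u"
proof -
  have "eventually (\<lambda>y. Phi y > u) at_top"
    using Phi_top assms(2) by (rule order_tendstoD)
  then obtain b where b: "Phi b > u" by (auto simp: eventually_at_top_linorder)
  have "eventually (\<lambda>y. Phi y < u) at_bot"
    using Phi_bot assms(1) by (rule order_tendstoD)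
  then obtain a where a: "Phi a < u" by (auto simp: eventually_at_bot_linorder)
  have ab: "a \<le> b"
  proof (rule ccontr)
    assume "\<not> a \<le> b" then have "Phi b \<le> Phi a" by (intro Phi_mono) simp
    with a b show False by linarith
  qed
  have "\<exists>x\<ge>a. x \<le> b \<and> Phi x = u"
    by (rule IVT[of Phi a u b, OF less_imp_le[OF a] less_imp_le[OF b] ab]) (simp add: Phi_cont)
  then show ?thesis by blast
qed



lemma N1: assumes "s > 0" shows "s * normal_density m s (m + s*u) = std_normal_density u"
proof -
  have q: "sqrt (2 * pi * s\<^sup>2) = sqrt (2*pi) * s" using assms by (simp add: real_sqrt_mult)
  have e: "-((m + s*u) - m)\<^sup>2 / (2 * s\<^sup>2) = - u\<^sup>2 / 2" using assms by (simp add: power2_eq_square field_simps)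
  show ?thesis unfolding normal_density_def std_normal_density_def q e using assms by simp
qed

lemma N2: assumes "t > 0" shows "t * std_normal_density (t*z - a) = normal_density (a/t) (1/t) z"
proof -
  have q: "sqrt (2 * pi * (1/t)\<^sup>2) = sqrt (2*pi) / t" using assms by (simp add: real_sqrt_mult real_sqrt_divide power2_eq_square)
  have e: "-(z - a/t)\<^sup>2 / (2 * (1/t)\<^sup>2) = - (t*z - a)\<^sup>2 / 2" using assms by (simp add: power2_eq_square field_simps)
  show ?thesis unfolding normal_density_def std_normal_density_def q e using assms by simp
qed

lemma N1b: assumes "s > 0" shows "s * normal_density m s (m + u * s) = std_normal_density u"
  using N1[OF assms, of m u] by (simp add: mult.commute[of u s])

lemma normal_cdf_Phi: assumes "s > 0" shows "normal_cdf m s x = Phi ((x - m) / s)"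
proof -
  have "emeasure (density lborel (normal_density m s)) {..x}
      = (\<integral>\<^sup>+ t. ennreal (normal_density m s t) * indicator {..x} t \<partial>lborel)"
    by (subst emeasure_density) auto
  also have "\<dots> = ennreal \<bar>s\<bar> * (\<integral>\<^sup>+ u. ennreal (normal_density m s (m + s*u)) * indicator {..x} (m + s*u) \<partial>lborel)"
    using assms by (subst nn_integral_real_affine[where c=s and t=m]) auto
  also have "\<dots> = (\<integral>\<^sup>+ u. ennreal (std_normal_density u) * indicator {..(x-m)/s} u \<partial>lborel)"
    using assms
    apply (subst nn_integral_cmult[symmetric], simp)
    apply (rule nn_integral_cong)
    subgoal for u
    proof -
      have ind: "indicator {..x} (m+s*u) = (indicator {..(x-m)/s} u :: ennreal)"
        using assms by (auto simp: indicator_def pos_le_divide_eq algebra_simps)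
      have "ennreal \<bar>s\<bar> * ennreal (normal_density m s (m + s*u)) = ennreal (s * normal_density m s (m + s*u))"
        using assms by (simp add: ennreal_mult normal_density_nonneg)
      also have "\<dots> = ennreal (std_normal_density u)" using N1[OF assms] by simp
      finally show ?thesis by (simp add: ind mult.assoc[symmetric])
    qed
    done
  also have "\<dots> = emeasure std_normal {..(x-m)/s}"
    by (subst emeasure_std_normal) auto
  finally show ?thesis unfolding normal_cdf_def Phi_def measure_def by simp
qed

lemma CV:
  fixes g :: "real \<Rightarrow> real"
  assumes [measurable]: "g \<in> borel_measurable borel" and t: "t > 0"
  shows "(\<integral>e. g ((a + e) / t) \<partial>std_normal) = (\<integral>z. g z * normal_density (a/t) (1/t) z \<partial>lborel)"
proof -
  have "(\<integral>e. g ((a + e) / t) \<partial>std_normal) = (\<integral>e. std_normal_density e * g ((a + e) / t) \<partial>lborel)"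
    unfolding std_normal_def by (subst integral_density) (auto simp: normal_density_nonneg)
  also have "\<dots> = \<bar>t\<bar> * (\<integral>z. std_normal_density (-a + t*z) * g ((a + (-a + t*z)) / t) \<partial>lborel)"
    using t by (subst lborel_integral_real_affine[where c=t and t="-a"]) auto
  also have "\<dots> = (\<integral>z. g z * normal_density (a/t) (1/t) z \<partial>lborel)"
    using t
    apply (subst integral_mult_right_zero[symmetric])
    apply (rule Bochner_Integration.integral_cong, simp)
    subgoal for z using N2[OF t, of z a] by (simp add: abs_of_pos)
    done
  finally show ?thesis .
qed



lemma gen_inv_bern:
  assumes "0 < p" "p < 1" "0 < u" "u \<le> 1"
  shows "gen_inv (bernoulli_cdf p) u = (if u \<le> 1 - p then 0 else 1)"
proof (cases "u \<le> 1 - p")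
  case True
  have "{y. u \<le> bernoulli_cdf p y} = {0..}"
    using assms True by (auto simp: bernoulli_cdf_def)
  then show ?thesis using True by (simp add: gen_inv_def)
next
  case False
  have "{y. u \<le> bernoulli_cdf p y} = {1..}"
    using assms False by (auto simp: bernoulli_cdf_def)
  then show ?thesis using False by (simp add: gen_inv_def)
qed

lemma gen_inv_normal_cdf:
  assumes "s > 0" shows "gen_inv (normal_cdf m s) (Phi v) = m + s * v"
proof -
  have "{y. Phi v \<le> normal_cdf m s y} = {m + s * v ..}"
    using assms by (auto simp: normal_cdf_Phi Phi_inj_le pos_le_divide_eq algebra_simps)
  then show ?thesis by (simp add: gen_inv_def)
qed

lemma integral_std_normal_indicator:
  "(\<integral>e. (if e \<le> c then 0 else 1 :: real) \<partial>std_normal) = 1 - Phi c"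
proof -
  interpret prob_space std_normal by (rule std_normal_prob)
  have "(\<integral>e. (if e \<le> c then 0 else 1 :: real) \<partial>std_normal) = (\<integral>e. indicator {c<..} e \<partial>std_normal)"
    by (rule Bochner_Integration.integral_cong) (auto simp: indicator_def)
  also have "\<dots> = measure std_normal {c<..}" by simp
  also have "\<dots> = 1 - Phi c"
  proof -
    have "{c<..} = space std_normal - {..c}" by auto
    then show ?thesis unfolding Phi_def using prob_compl[of "{..c}"] by simp
  qed
  finally show ?thesis .
qed

lemma reg_lemma:
  assumes p: "0 < p" "p < 1" and t: "t > 0" and l: "Phi l = 1 - p"
  shows "(\<integral>e. gen_inv (bernoulli_cdf p) (Phi ((A + e) / t)) \<partial>std_normal) = 1 - Phi (t * l - A)"
proof -
  have "(\<integral>e. gen_inv (bernoulli_cdf p) (Phi ((A + e) / t)) \<partial>std_normal)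
       = (\<integral>e. (if e \<le> t * l - A then 0 else 1 :: real) \<partial>std_normal)"
  proof (rule Bochner_Integration.integral_cong, simp)
    fix e
    have "gen_inv (bernoulli_cdf p) (Phi ((A + e) / t)) = (if Phi ((A + e) / t) \<le> 1 - p then 0 else 1)"
      using p Phi_pos Phi_le1 by (intro gen_inv_bern) auto
    also have "(Phi ((A + e) / t) \<le> 1 - p) = (e \<le> t * l - A)"
      unfolding l[symmetric] Phi_inj_le using t by (auto simp: pos_divide_le_eq algebra_simps)
    finally show "gen_inv (bernoulli_cdf p) (Phi ((A + e) / t)) = (if e \<le> t * l - A then 0 else 1)" .
  qed
  also have "\<dots> = 1 - Phi (t * l - A)" by (rule integral_std_normal_indicator)
  finally show ?thesis .
qed

lemma expit_bounds: "0 < expit t" "expit t < 1"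
  unfolding expit_def by (auto simp: divide_simps add_pos_pos)

lemma integral_pos_std_normal:
  fixes f :: "real \<Rightarrow> real"
  assumes [measurable]: "f \<in> borel_measurable borel" and b: "\<And>e. \<bar>f e\<bar> \<le> B" and pos: "\<And>e. f e > 0"
  shows "(\<integral>e. f e \<partial>std_normal) > 0"
proof -
  interpret prob_space std_normal by (rule std_normal_prob)
  have int: "integrable std_normal f"
    by (rule integrable_const_bound[where B=B]) (auto simp: b)
  have ge: "(\<integral>e. f e \<partial>std_normal) \<ge> 0" using pos by (intro integral_nonneg_AE) (auto simp: less_imp_le)
  have "(\<integral>e. f e \<partial>std_normal) \<noteq> 0"
  proof
    assume "(\<integral>e. f e \<partial>std_normal) = 0"
    then have "AE e in std_normal. f e = 0"
      using integral_nonneg_eq_0_iff_AE[OF int] pos by (auto simp: less_imp_le)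
    then have "AE e in std_normal. False" using pos by (auto elim: AE_mp simp: less_le)
    then show False by simp
  qed
  with ge show ?thesis by simp
qed



lemma oneminus_std:
  fixes f :: "real \<Rightarrow> real"
  assumes "integrable std_normal f"
  shows "(\<integral>e. 1 - f e \<partial>std_normal) = 1 - (\<integral>e. f e \<partial>std_normal)"
proof -
  interpret prob_space std_normal by (rule std_normal_prob)
  have one: "(\<integral>e. (1::real) \<partial>std_normal) = 1"
    using lebesgue_integral_const[where M=std_normal and a="1::real"] prob_space by simp
  have "(\<integral>e. 1 - f e \<partial>std_normal) = (\<integral>e. (1::real) \<partial>std_normal) - (\<integral>e. f e \<partial>std_normal)"
    using assms by (intro Bochner_Integration.integral_diff) simp_all
  then show ?thesis by (simp only: one)
qed

theorem proposition3:
  fixes w1 :: "'a::euclidean_space" and w2 :: "'b::euclidean_space"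
    and beta_x :: 'a and beta_m beta_y :: "'a \<times> 'b"
    and sigma_x sigma_m \<alpha> \<beta> \<gamma> x0 x1 :: real
  assumes "sigma_x > 0" and "sigma_m > 0"
  defines "Fx \<equiv> normal_cdf (w1 \<bullet> beta_x) sigma_x"
    and "Fm \<equiv> normal_cdf ((w1, w2) \<bullet> beta_m) sigma_m"
    and "Fy \<equiv> bernoulli_cdf (expit ((w1, w2) \<bullet> beta_y))"
    and "zx \<equiv> (\<lambda>x. (x - w1 \<bullet> beta_x) / sigma_x)"
    and "\<psi> \<equiv> (\<lambda>za zm. Phi (tau_y \<alpha> \<beta> \<gamma> * gen_inv Phi (bernoulli_cdf (expit ((w1, w2) \<bullet> beta_y)) 0) - \<gamma> * za - tau_m \<alpha> * \<beta> * zm))"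
    and "\<pi> \<equiv> (\<lambda>z zm. normal_density (\<alpha> * z / tau_m \<alpha>) (1 / tau_m \<alpha>) zm)"
  shows "NDE \<alpha> \<beta> \<gamma> Fx Fm Fy x0 x1
           = (\<integral>zm. (\<psi> (zx x0) zm - \<psi> (zx x1) zm) * \<pi> (zx x0) zm \<partial>lborel)
       \<and> NIE \<alpha> \<beta> \<gamma> Fx Fm Fy x0 x1
           = (\<integral>zm. \<psi> (zx x1) zm * \<pi> (zx x0) zm \<partial>lborel)
             - (\<integral>zm. \<psi> (zx x1) zm * \<pi> (zx x1) zm \<partial>lborel)
       \<and> (x0 \<noteq> x1 \<longrightarrow> (NDE \<alpha> \<beta> \<gamma> Fx Fm Fy x0 x1 = 0 \<longleftrightarrow> \<gamma> = 0))
       \<and> (x0 \<noteq> x1 \<longrightarrow> (\<alpha> = 0 \<or> \<beta> = 0) \<longrightarrow> NIE \<alpha> \<beta> \<gamma> Fx Fm Fy x0 x1 = 0)"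
proof -
  note Fx_def = assms(3) and Fm_def = assms(4) and Fy_def = assms(5) and zx_def = assms(6)
    and psi_def = assms(7) and pi_def = assms(8)
  define p where "p = expit ((w1, w2) \<bullet> beta_y)"
  have p: "0 < p" "p < 1" unfolding p_def by (rule expit_bounds)+
  obtain l where l: "Phi l = 1 - p" using Phi_surj[of "1 - p"] p by auto
  have ly: "gen_inv Phi (bernoulli_cdf p 0) = l"
    using l gen_inv_Phi[of l] by (simp add: bernoulli_cdf_def)
  define tm where "tm = tau_m \<alpha>"
  define ty where "ty = tau_y \<alpha> \<beta> \<gamma>"
  have tm: "tm > 0" unfolding tm_def tau_m_def using zero_le_power2[of \<alpha>]
    by (intro real_sqrt_gt_zero) linarith
  have ty: "ty > 0" unfolding ty_def tau_y_def
    using zero_le_power2[of \<beta>] zero_le_power2[of "\<gamma> + \<alpha> * \<beta>"]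
    by (intro real_sqrt_gt_zero) linarith
  have psi: "\<And>za zm. \<psi> za zm = Phi (ty * l - \<gamma> * za - tm * \<beta> * zm)"
    unfolding psi_def ty_def tm_def p_def[symmetric] ly by simp
  have psi_meas[measurable]: "\<And>za. (\<psi> za) \<in> borel_measurable borel"
    unfolding psi by measurable
  have zxe: "\<And>x. gen_inv Phi (Fx x) = zx x"
    unfolding Fx_def zx_def using assms(1) by (simp add: normal_cdf_Phi gen_inv_Phi)
  have Fmi: "\<And>v. gen_inv Phi (Fm (gen_inv Fm (Phi v))) = v"
    unfolding Fm_def using assms(2) by (simp add: normal_cdf_Phi gen_inv_Phi gen_inv_normal_cdf)
  have reg: "\<And>xa v. gsem_reg \<alpha> \<beta> \<gamma> Fx Fm Fy xa (gen_inv Fm (Phi v)) = 1 - \<psi> (zx xa) v"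
  proof -
    fix xa v
    have "gsem_reg \<alpha> \<beta> \<gamma> Fx Fm Fy xa (gen_inv Fm (Phi v))
        = (\<integral>e. gen_inv (bernoulli_cdf p) (Phi ((\<gamma> * zx xa + \<beta> * tm * v + e) / ty)) \<partial>std_normal)"
      unfolding gsem_reg_def zxe Fmi Fy_def p_def tm_def ty_def ..
    also have "\<dots> = 1 - Phi (ty * l - (\<gamma> * zx xa + \<beta> * tm * v))"
      by (rule reg_lemma[OF p ty l])
    also have "\<dots> = 1 - \<psi> (zx xa) v" unfolding psi by (simp add: algebra_simps)
    finally show "gsem_reg \<alpha> \<beta> \<gamma> Fx Fm Fy xa (gen_inv Fm (Phi v)) = 1 - \<psi> (zx xa) v" .
  qed
  have cf: "\<And>xa xb. gsem_cf \<alpha> \<beta> \<gamma> Fx Fm Fy xa xb = (\<integral>e. 1 - \<psi> (zx xa) ((\<alpha> * zx xb + e) / tm) \<partial>std_normal)"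
    unfolding gsem_cf_def zxe reg tm_def ..
  have psib: "\<And>za zm. \<bar>\<psi> za zm\<bar> \<le> 1" unfolding psi using Phi_pos Phi_le1
    by (simp add: abs_le_iff less_imp_le)
  interpret S: prob_space std_normal by (rule std_normal_prob)
  have int: "\<And>za zb. integrable std_normal (\<lambda>e. \<psi> za ((\<alpha> * zb + e) / tm))"
    by (rule S.integrable_const_bound[where B=1]) (auto simp: psib)
  have cf2: "\<And>xa xb. gsem_cf \<alpha> \<beta> \<gamma> Fx Fm Fy xa xb = 1 - (\<integral>e. \<psi> (zx xa) ((\<alpha> * zx xb + e) / tm) \<partial>std_normal)"
    unfolding cf by (rule oneminus_std[OF int])
  have pi: "\<And>z. \<pi> z = normal_density (\<alpha> * z / tm) (1 / tm)"
    unfolding pi_def tm_def by (simp add: fun_eq_iff)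
  have CV1: "\<And>za zb. (\<integral>e. \<psi> za ((\<alpha> * zb + e) / tm) \<partial>std_normal) = (\<integral>zm. \<psi> za zm * \<pi> zb zm \<partial>lborel)"
    unfolding pi by (rule CV[OF psi_meas tm])
  define D where "D = (\<lambda>e. \<psi> (zx x0) ((\<alpha> * zx x0 + e) / tm) - \<psi> (zx x1) ((\<alpha> * zx x0 + e) / tm))"
  have D_meas[measurable]: "D \<in> borel_measurable borel" unfolding D_def by measurable
  have nde_D: "NDE \<alpha> \<beta> \<gamma> Fx Fm Fy x0 x1 = (\<integral>e. D e \<partial>std_normal)"
    unfolding NDE_def cf2 D_def by (subst Bochner_Integration.integral_diff[OF int int]) simp
  have nde: "NDE \<alpha> \<beta> \<gamma> Fx Fm Fy x0 x1
           = (\<integral>zm. (\<psi> (zx x0) zm - \<psi> (zx x1) zm) * \<pi> (zx x0) zm \<partial>lborel)"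
    unfolding nde_D D_def pi by (rule CV) (auto simp: tm)
  have nie: "NIE \<alpha> \<beta> \<gamma> Fx Fm Fy x0 x1
           = (\<integral>zm. \<psi> (zx x1) zm * \<pi> (zx x0) zm \<partial>lborel)
             - (\<integral>zm. \<psi> (zx x1) zm * \<pi> (zx x1) zm \<partial>lborel)"
    unfolding NIE_def cf2 CV1 by simp
  have p3: "x0 \<noteq> x1 \<longrightarrow> (NDE \<alpha> \<beta> \<gamma> Fx Fm Fy x0 x1 = 0 \<longleftrightarrow> \<gamma> = 0)"
  proof (intro impI iffI)
    assume "\<gamma> = 0" then show "NDE \<alpha> \<beta> \<gamma> Fx Fm Fy x0 x1 = 0"
      unfolding nde_D D_def psi by simp
  next
    assume ne: "x0 \<noteq> x1" and N0: "NDE \<alpha> \<beta> \<gamma> Fx Fm Fy x0 x1 = 0"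
    show "\<gamma> = 0"
    proof (rule ccontr)
      assume g: "\<gamma> \<noteq> 0"
      have "zx x0 \<noteq> zx x1" unfolding zx_def using ne assms(1) by (auto simp: divide_simps)
      then have gz: "\<gamma> * zx x0 \<noteq> \<gamma> * zx x1" using g by simp
      have Db: "\<bar>D e\<bar> \<le> 2" for e
        using psib[of "zx x0" "(\<alpha> * zx x0 + e) / tm"] psib[of "zx x1" "(\<alpha> * zx x0 + e) / tm"]
        unfolding D_def abs_le_iff by linarith
      show False
      proof (cases "\<gamma> * zx x0 < \<gamma> * zx x1")
        case True
        have "\<And>e. D e > 0" unfolding D_def psi using True
          by (intro diff_gt_0_iff_gt[THEN iffD2] Phi_strict) linarith
        then have "(\<integral>e. D e \<partial>std_normal) > 0" using Db by (intro integral_pos_std_normal) auto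
        with N0 nde_D show False by simp
      next
        case False
        then have F: "\<gamma> * zx x1 < \<gamma> * zx x0" using gz by linarith
        have "D e < 0" for e unfolding D_def psi using F
          by (intro diff_less_0_iff_less[THEN iffD2] Phi_strict) linarith
        then have "\<And>e. - D e > 0" by simp
        then have "(\<integral>e. - D e \<partial>std_normal) > 0" using Db by (intro integral_pos_std_normal[where B=2]) auto
        with N0 nde_D show False by simp
      qed
    qed
  qed
  have p4: "x0 \<noteq> x1 \<longrightarrow> (\<alpha> = 0 \<or> \<beta> = 0) \<longrightarrow> NIE \<alpha> \<beta> \<gamma> Fx Fm Fy x0 x1 = 0"
    by (auto simp: NIE_def gsem_cf_def gsem_reg_def)
  show ?thesis using nde nie p3 p4 by blast
qed

end
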